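(* Let $\hat q$, $\hat q_\lambda$ be as defined in the context, with $\lambda>0$, and let $\mathcal{C}(x)=\{y\in[C]: s(x,y)\le \hat q\}$ and $\mathcal{C}_\lambda(x)=\{y\in[C]: s_\lambda(x,y)\le\hat q_\lambda\}$. Let $\mathcal{Y}_1(x):=\{y\in[C]: d(y,\hat y(x))\neq 0\}$. Then for every $x$, $$\mathcal{C}_\lambda(x)\cap\mathcal{Y}_1(x)\subseteq \mathcal{C}(x)\cap \mathcal{Y}_1(x).$$
   Context: Classification with $C$ classes, labels in $[C]=\{1,\dots,C\}$. A classifier outputs a softmax vector $\hat\pi(x)\in\mathbb{R}^C$ and predicted class $\hat y(x)=\arg\max_i \hat\pi_i(x)$. A map $g:[C]\to[G]$ partitions the classes into $G$ groups. Define $d(y,y'):=\mathbb{I}\{g(y)\neq g(y')\}$. Given any real-valued score function $s(x,y)$ and $\lambda>0$, define the penalized score $s_\lambda(x,y):=s(x,y)+\lambda\, d(y,\hat y(x))$. Given a calibration set $\{(x_i,y_i)\}_{i=1}^n$ and $\alpha\in(0,1)$ with $\lceil (n+1)(1-\alpha)\rceil\le n$, $\hat q$ (resp. $\hat q_\lambda$) is the $\lceil (n+1)(1-\alpha)\rceil$-th smallest value of $\{s(x_i,y_i)\}_{i=1}^n$ (resp. $\{s_\lambda(x_i,y_i)\}_{i=1}^n$). *)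

theory Defs
  imports Complex_Main
begin

text \<open>Classes are the naturals 1..C. The predicted class is an argmax of the softmax vector
  over [C] (ties broken by Hilbert choice).\<close>
definition pred_class :: "nat \<Rightarrow> ('x \<Rightarrow> nat \<Rightarrow> real) \<Rightarrow> 'x \<Rightarrow> nat" where
  "pred_class C phat x = (SOME i. i \<in> {1..C} \<and> (\<forall>j\<in>{1..C}. phat x j \<le> phat x i))"

definition grp_dist :: "(nat \<Rightarrow> nat) \<Rightarrow> nat \<Rightarrow> nat \<Rightarrow> real" where
  "grp_dist g y y' = (if g y \<noteq> g y' then 1 else 0)"

definition pen_score ::
  "nat \<Rightarrow> ('x \<Rightarrow> nat \<Rightarrow> real) \<Rightarrow> (nat \<Rightarrow> nat) \<Rightarrow> ('x \<Rightarrow> nat \<Rightarrow> real) \<Rightarrow> real \<Rightarrow> 'x \<Rightarrow> nat \<Rightarrow> real" where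
  "pen_score C phat g s lam x y = s x y + lam * grp_dist g y (pred_class C phat x)"

text \<open>k-th smallest (1-based, counted with multiplicity) of the values v 1, ..., v n.\<close>
definition kth_smallest :: "nat \<Rightarrow> nat \<Rightarrow> (nat \<Rightarrow> real) \<Rightarrow> real" where
  "kth_smallest k n v = sort (map v [1..<n+1]) ! (k - 1)"

definition conf_rank :: "nat \<Rightarrow> real \<Rightarrow> nat" where
  "conf_rank n \<alpha> = nat \<lceil>(real n + 1) * (1 - \<alpha>)\<rceil>"

end

theory Submission
  imports Defs "HOL-Library.Multiset"
begin

lemma len_filter_mono:
  fixes v w :: "nat \<Rightarrow> real"
  assumes "\<forall>i\<in>set l. v i \<le> w i + c"
  shows "length (filter (\<lambda>z. z \<le> t) (map w l)) \<le> length (filter (\<lambda>z. z \<le> t + c) (map v l))"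
  using assms
proof (induction l)
  case (Cons a l)
  then have "w a \<le> t \<Longrightarrow> v a \<le> t + c" by force
  with Cons show ?case by auto
qed simp

lemma len_filter_sort: "length (filter P (sort xs)) = length (filter P (xs::real list))"
proof -
  have "mset (filter P (sort xs)) = mset (filter P xs)" by (simp add: mset_filter)
  then show ?thesis by (metis size_mset)
qed

lemma sort_nth_shift:
  fixes v w :: "nat \<Rightarrow> real"
  assumes "\<forall>i\<in>set l. v i \<le> w i + c" and "k < length l"
  shows "sort (map v l) ! k \<le> sort (map w l) ! k + c"
proof (rule ccontr)
  define a where "a = sort (map w l)"
  define b where "b = sort (map v l)"
  define t where "t = a ! k"
  assume "\<not> ?thesis"
  hence gt: "b ! k > t + c" unfolding a_def b_def t_def by simp
  have la: "length a = length l" "length b = length l" unfolding a_def b_def by simp_all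
  have sa: "sorted a" "sorted b" unfolding a_def b_def by simp_all
  have "filter (\<lambda>z. z \<le> t) (take (Suc k) a) = take (Suc k) a"
  proof (rule filter_True, rule ballI)
    fix z assume "z \<in> set (take (Suc k) a)"
    then obtain j where "j < length (take (Suc k) a)" "z = take (Suc k) a ! j" unfolding in_set_conv_nth by blast
    then have "j \<le> k" "z = a ! j" by auto
    moreover have "k < length a" using la assms(2) by simp
    ultimately show "z \<le> t" unfolding t_def using sorted_nth_mono[OF sa(1)] by simp
  qed
  hence "Suc k \<le> length (filter (\<lambda>z. z \<le> t) a)"
    using la assms(2) filter_append[of "\<lambda>z. z \<le> t" "take (Suc k) a" "drop (Suc k) a"] by simp
  also have "\<dots> = length (filter (\<lambda>z. z \<le> t) (map w l))" unfolding a_def by (rule len_filter_sort)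
  also have "\<dots> \<le> length (filter (\<lambda>z. z \<le> t + c) (map v l))" using assms(1) by (rule len_filter_mono)
  also have "\<dots> = length (filter (\<lambda>z. z \<le> t + c) b)" unfolding b_def by (rule len_filter_sort[symmetric])
  also have "filter (\<lambda>z. z \<le> t + c) b = filter (\<lambda>z. z \<le> t + c) (take k b)"
  proof -
    have "filter (\<lambda>z. z \<le> t + c) (drop k b) = []"
    proof (rule filter_False[OF ballI])
      fix z assume "z \<in> set (drop k b)"
      then obtain j where "j < length (drop k b)" "z = drop k b ! j" unfolding in_set_conv_nth by blast
      then have "z = b ! (k + j)" "k + j < length b" by auto
      then have "b ! k \<le> z" using sorted_nth_mono[OF sa(2), of k "k + j"] by simp
      then show "\<not> z \<le> t + c" using gt by simp
    qed
    then show ?thesis using filter_append[of "\<lambda>z. z \<le> t + c" "take k b" "drop k b"] by simp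
  qed
  also have "length \<dots> \<le> k" using la assms(2) length_filter_le[of "\<lambda>z. z \<le> t + c" "take k b"] by simp
  finally show False by simp
qed

theorem proposition1:
  fixes C G n :: nat and phat :: "'x \<Rightarrow> nat \<Rightarrow> real" and g :: "nat \<Rightarrow> nat"
    and s :: "'x \<Rightarrow> nat \<Rightarrow> real" and lam \<alpha> :: real
    and xs :: "nat \<Rightarrow> 'x" and ys :: "nat \<Rightarrow> nat" and x :: 'x
  assumes "C \<ge> 1"
    and "\<forall>z. (\<forall>i\<in>{1..C}. phat z i \<ge> 0) \<and> (\<Sum>i\<in>{1..C}. phat z i) = 1"
    and "\<forall>y\<in>{1..C}. g y \<in> {1..G}"
    and "\<forall>i\<in>{1..n}. ys i \<in> {1..C}"
    and "lam > 0" and "0 < \<alpha>" and "\<alpha> < 1"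
    and "conf_rank n \<alpha> \<le> n"
  shows "{y \<in> {1..C}. pen_score C phat g s lam x y
              \<le> kth_smallest (conf_rank n \<alpha>) n (\<lambda>i. pen_score C phat g s lam (xs i) (ys i))}
           \<inter> {y \<in> {1..C}. grp_dist g y (pred_class C phat x) \<noteq> 0}
         \<subseteq> {y \<in> {1..C}. s x y \<le> kth_smallest (conf_rank n \<alpha>) n (\<lambda>i. s (xs i) (ys i))}
           \<inter> {y \<in> {1..C}. grp_dist g y (pred_class C phat x) \<noteq> 0}"
  proof
  fix y assume y: "y \<in> {y \<in> {1..C}. pen_score C phat g s lam x y
              \<le> kth_smallest (conf_rank n \<alpha>) n (\<lambda>i. pen_score C phat g s lam (xs i) (ys i))}
           \<inter> {y \<in> {1..C}. grp_dist g y (pred_class C phat x) \<noteq> 0}"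
  have pos: "(real n + 1) * (1 - \<alpha>) > 0" using assms(7) by (simp add: mult_pos_pos)
  have "0 < \<lceil>(real n + 1) * (1 - \<alpha>)\<rceil>" using pos by simp
  then have k1: "conf_rank n \<alpha> \<ge> 1" unfolding conf_rank_def by linarith
  have kl: "conf_rank n \<alpha> - 1 < length [1..<n+1]" using k1 assms(8) by simp
  have gd: "grp_dist g a b \<le> 1" for a b unfolding grp_dist_def by simp
  have le: "\<forall>i\<in>set [1..<n+1]. pen_score C phat g s lam (xs i) (ys i) \<le> s (xs i) (ys i) + lam"
  proof
    fix i
    have "lam * grp_dist g (ys i) (pred_class C phat (xs i)) \<le> lam * 1"
      using gd assms(5) by (intro mult_left_mono) auto
    then show "pen_score C phat g s lam (xs i) (ys i) \<le> s (xs i) (ys i) + lam"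
      unfolding pen_score_def by simp
  qed
  have q: "kth_smallest (conf_rank n \<alpha>) n (\<lambda>i. pen_score C phat g s lam (xs i) (ys i))
      \<le> kth_smallest (conf_rank n \<alpha>) n (\<lambda>i. s (xs i) (ys i)) + lam"
    unfolding kth_smallest_def by (rule sort_nth_shift[OF le kl])
  have y1: "y \<in> {1..C}" and y2: "grp_dist g y (pred_class C phat x) \<noteq> 0"
    and y3: "pen_score C phat g s lam x y
              \<le> kth_smallest (conf_rank n \<alpha>) n (\<lambda>i. pen_score C phat g s lam (xs i) (ys i))"
    using y by blast+
  have "grp_dist g y (pred_class C phat x) = 1" using y2 unfolding grp_dist_def by presburger
  then have "pen_score C phat g s lam x y = s x y + lam" unfolding pen_score_def by simp
  with y3 q have "s x y \<le> kth_smallest (conf_rank n \<alpha>) n (\<lambda>i. s (xs i) (ys i))" by linarith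
  with y1 y2 show "y \<in> {y \<in> {1..C}. s x y \<le> kth_smallest (conf_rank n \<alpha>) n (\<lambda>i. s (xs i) (ys i))}
           \<inter> {y \<in> {1..C}. grp_dist g y (pred_class C phat x) \<noteq> 0}" by blast
qed

end
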